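(* Let $f:\mathbb{R}^n\to\mathbb{R}$ be convex, continuously differentiable and locally strongly convex with locally Lipschitz gradient, with $\mathcal{X}^*:=\arg\min f\neq\emptyset$ and optimal value $f^*$. Generate the AdaSGA sequence $x^{k+1}=x^k-\alpha_k\gamma_k\nabla f(x^k)$ with parameters $x^0$, $\alpha_0>0$, $\theta_0>0$, $\tau>1$, $0<\omega\le\frac1{\sqrt2}$, $\gamma_k\in[\gamma_{\min},\gamma_{\max}]\subset(0,\infty)$, and for $k\ge1$, $L_k:=\frac{\|\nabla f(x^k)-\nabla f(x^{k-1})\|}{\|x^k-x^{k-1}\|}$, $\alpha_k:=\min\{\frac{\alpha_{k-1}\gamma_{k-1}}{\gamma_k}\sqrt{2(1-\omega^2)+\theta_{k-1}/\tau},\frac{\omega}{\gamma_kL_k}\}$, $\theta_k:=\frac{\alpha_k\gamma_k}{\alpha_{k-1}\gamma_{k-1}}$. Define $\eta,R,W,L_W,\mu_W,\hat q$ and $\tilde c_1,\tilde c_2,\tilde c_3$ by: $\eta:=\mathrm{dist}^2(x^0;\mathcal{X}^* )+2\alpha_0^2\gamma_0^2\|\nabla f(x^0)\|^2+2\alpha_0\gamma_0\theta_0(f(x^0)-f^* )$; $W:=\overline B(0;R)$ with $R>3\sqrt\eta+\mathrm{dist}(x^0;\mathcal{X}^* )+\|x^0\|$; $L_W>0$ a Lipschitz constant of $\nabla f$ on $W$; $\mu_W:=\inf_{x,y\in W,x\ne y}\frac{\langle\nabla f(y)-\nabla f(x),y-x\rangle}{\|y-x\|^2}$; $m:=\min\{\frac{\alpha_0\gamma_0\mu_W}{\omega},\frac{\mu_W}{L_W}\}$;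 $\hat q:=\min\{\frac{\mu_W}{2}\min\{\alpha_0\gamma_0,\frac{\omega}{L_W}\},\frac{\mu_W(1-\omega^2)}{2\omega^3L_W+\mu_W(1-\omega^2)},\frac{(\tau-1)m}{\tau(2(1-\omega^2)+m)}\}$; $\tilde c_1:=\sqrt{(R+\|x^0\|)^2+\eta}$, $\tilde c_2:=\frac{\omega L_W^2\tilde c_1^2}{\mu_W\min\{\alpha_0^2\gamma_0^2L_W^2,\omega^2\}}$, $\tilde c_3:=\frac{\sqrt{2\tilde c_1^2(1-\omega^2)\omega L_W^3}}{\sqrt{2\omega^2L_W+(1-\omega^2)\mu_W}\min\{\alpha_0\gamma_0L_W,\omega\}}$. Let $\varepsilon>0$ and for $a,b>0$ let $M(a,b):=\Big\lceil\frac{\log(\varepsilon^{-1})+\log a}{\log(b^{-1})}+1\Big\rceil$. Then there exists $x^*\in\mathcal{X}^*$ such that: (a) the first index $N_x(\varepsilon)$ with $\|x^k-x^*\|\le\varepsilon$ satisfies $N_x(\varepsilon)\le M(\tilde c_1,\sqrt{1-\hat q})$; (b) the first index $N_f(\varepsilon)$ with $f(x^k)-f^*\le\varepsilon$ satisfies $N_f(\varepsilon)\le M(\tilde c_2,1-\hat q)$; (c) the first index $N_{\nabla f}(\varepsilon)$ with $\|\nabla f(x^k)\|\le\varepsilon$ satisfies $N_{\nabla f}(\varepsilon)\le M(\tilde c_3,\sqrt{1-\hat q})$.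
   Context: $f$ is locally strongly convex if every $x$ has $\delta_x>0$, $\mu_x>0$ with $f(y)\ge f(z)+\langle\nabla f(z),y-z\rangle+\frac{\mu_x}{2}\|y-z\|^2$ for all $y,z\in B(x;\delta_x)$. *)

theory Defs
  imports "HOL-Analysis.Analysis"
begin

definition loc_strongly_convex :: "('a::real_inner \<Rightarrow> real) \<Rightarrow> ('a \<Rightarrow> 'a) \<Rightarrow> bool" where
  "loc_strongly_convex f g \<longleftrightarrow>
     (\<forall>x. \<exists>\<delta>>0. \<exists>\<mu>>0. \<forall>y\<in>ball x \<delta>. \<forall>z\<in>ball x \<delta>.
        f y \<ge> f z + g z \<bullet> (y - z) + \<mu> / 2 * (norm (y - z))\<^sup>2)"

definition loc_lipschitz :: "('a::metric_space \<Rightarrow> 'b::metric_space) \<Rightarrow> bool" where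
  "loc_lipschitz g \<longleftrightarrow> (\<forall>x. \<exists>\<delta>>0. \<exists>L. L-lipschitz_on (ball x \<delta>) g)"

definition argmin_set :: "('a \<Rightarrow> real) \<Rightarrow> 'a set" where
  "argmin_set f = {x. \<forall>y. f x \<le> f y}"

definition opt_val :: "('a \<Rightarrow> real) \<Rightarrow> real" where
  "opt_val f = Inf (range f)"

definition adasga_L :: "('a::real_normed_vector \<Rightarrow> 'a) \<Rightarrow> (nat \<Rightarrow> 'a) \<Rightarrow> nat \<Rightarrow> real" where
  "adasga_L g x k = norm (g (x k) - g (x (k - 1))) / norm (x k - x (k - 1))"

text \<open>AdaSGA step-size update; omega/(gamma_k L_k) is read as +infinity when L_k = 0.\<close>
definition adasga_alpha_next ::
  "real \<Rightarrow> real \<Rightarrow> real \<Rightarrow> real \<Rightarrow> real \<Rightarrow> real \<Rightarrow> real \<Rightarrow> real" where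
  "adasga_alpha_next \<omega> \<tau> a_prev g_prev th_prev g_cur L =
     (let a = a_prev * g_prev / g_cur * sqrt (2 * (1 - \<omega>\<^sup>2) + th_prev / \<tau>)
      in if L = 0 then a else min a (\<omega> / (g_cur * L)))"

definition Mbound :: "real \<Rightarrow> real \<Rightarrow> real \<Rightarrow> int" where
  "Mbound \<epsilon> a b = \<lceil>(ln (inverse \<epsilon>) + ln a) / ln (inverse b) + 1\<rceil>"

end

theory Submission
  imports Defs
begin


lemma deriv_line:
  fixes f :: "'a::real_inner \<Rightarrow> real"
  assumes grad: "\<And>z. (f has_derivative (\<lambda>h. g z \<bullet> h)) (at z)"
  shows "((\<lambda>s. f (x + s *\<^sub>R v)) has_real_derivative (g (x + s *\<^sub>R v) \<bullet> v)) (at s)"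
proof -
  have l: "((\<lambda>s. x + s *\<^sub>R v) has_derivative (\<lambda>h. h *\<^sub>R v)) (at s)"
    by (auto intro!: derivative_eq_intros)
  have "((\<lambda>s. f (x + s *\<^sub>R v)) has_derivative (\<lambda>h. g (x + s *\<^sub>R v) \<bullet> (h *\<^sub>R v))) (at s)"
    using has_derivative_compose[OF l grad] by simp
  then show ?thesis
    by (rule has_derivative_imp_has_field_derivative) (simp add: mult.commute)
qed

lemma grad_ineq:
  fixes f :: "'a::real_inner \<Rightarrow> real"
  assumes conv: "convex_on UNIV f"
    and grad: "\<And>z. (f has_derivative (\<lambda>h. g z \<bullet> h)) (at z)"
  shows "f y \<ge> f x + g x \<bullet> (y - x)"
proof -
  let ?p = "\<lambda>s. f (x + s *\<^sub>R (y - x))"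
  have cp: "convex_on UNIV ?p"
  proof (rule convex_onI)
    fix t a b :: real assume t: "t > 0" "t < 1"
    have "x + ((1 - t) *\<^sub>R a + t *\<^sub>R b) *\<^sub>R (y - x)
        = (1 - t) *\<^sub>R (x + a *\<^sub>R (y - x)) + t *\<^sub>R (x + b *\<^sub>R (y - x))"
      by (simp add: algebra_simps)
    then show "?p ((1 - t) *\<^sub>R a + t *\<^sub>R b) \<le> (1 - t) * ?p a + t * ?p b"
      using convex_onD[OF conv, of t "x + a *\<^sub>R (y - x)" "x + b *\<^sub>R (y - x)"] t by simp
  qed simp
  have d: "(?p has_real_derivative (g (x + 0 *\<^sub>R (y - x)) \<bullet> (y - x))) (at 0 within UNIV)"
    using deriv_line[OF grad, of x "y - x" 0] by simp
  have "?p 1 - ?p 0 \<ge> (g (x + 0 *\<^sub>R (y - x)) \<bullet> (y - x)) * (1 - 0)"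
    by (rule convex_on_imp_above_tangent[OF cp _ _ _ d]) auto
  then show ?thesis by simp
qed

lemma quad_bound_below:
  fixes f :: "'a::real_inner \<Rightarrow> real"
  assumes grad: "\<And>z. (f has_derivative (\<lambda>h. g z \<bullet> h)) (at z)"
    and mon: "\<And>s. 0 \<le> s \<Longrightarrow> s \<le> 1 \<Longrightarrow> (g (x + s *\<^sub>R (y - x)) - g x) \<bullet> (y - x) \<ge> c * s * (norm (y - x))\<^sup>2"
  shows "f y \<ge> f x + g x \<bullet> (y - x) + c / 2 * (norm (y - x))\<^sup>2"
proof -
  let ?p = "\<lambda>s. f (x + s *\<^sub>R (y - x)) - s * (g x \<bullet> (y - x)) - c / 2 * s\<^sup>2 * (norm (y - x))\<^sup>2"
  have "?p 0 \<le> ?p 1"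
  proof (rule DERIV_nonneg_imp_nondecreasing[of 0 1])
    fix s :: real assume s: "0 \<le> s" "s \<le> 1"
    have "(?p has_real_derivative (g (x + s *\<^sub>R (y - x)) \<bullet> (y - x) - 1 * (g x \<bullet> (y - x))
          - c / 2 * (2 * s) * (norm (y - x))\<^sup>2)) (at s)"
      by (rule derivative_eq_intros deriv_line[OF grad] | simp)+
    moreover have "g (x + s *\<^sub>R (y - x)) \<bullet> (y - x) - 1 * (g x \<bullet> (y - x))
          - c / 2 * (2 * s) * (norm (y - x))\<^sup>2 \<ge> 0"
      using mon[OF s] by (simp add: inner_diff_left)
    ultimately show "\<exists>y. (?p has_real_derivative y) (at s) \<and> 0 \<le> y" by blast
  qed simp
  then show ?thesis by simp
qed



lemma chain_mono:
  fixes g :: "'a::real_inner \<Rightarrow> 'a"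
  assumes loc: "\<And>p y z. p \<in> K \<Longrightarrow> y \<in> ball p e \<Longrightarrow> z \<in> ball p e \<Longrightarrow> (g y - g z) \<bullet> (y - z) \<ge> \<mu> * (norm (y - z))\<^sup>2"
    and K: "convex K" and y: "y \<in> K" and z: "z \<in> K" and e: "e > 0"
  shows "(g y - g z) \<bullet> (y - z) \<ge> \<mu> * (norm (y - z))\<^sup>2"
proof -
  obtain N :: nat where N: "norm (y - z) / e < real N" using reals_Archimedean2 by blast
  have Npos: "N > 0" using N e by (cases N) (auto simp: divide_less_0_iff)
  define p where "p i = z + (real i / real N) *\<^sub>R (y - z)" for i
  have pK: "p i \<in> K" if "i \<le> N" for i
  proof -
    have "p i = (1 - real i / real N) *\<^sub>R z + (real i / real N) *\<^sub>R y"
      by (simp add: p_def algebra_simps)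
    moreover have "0 \<le> real i / real N" "real i / real N \<le> 1" using that Npos by auto
    ultimately show ?thesis using convexD_alt[OF K z y] by simp
  qed
  have step: "p (Suc i) - p i = (1 / real N) *\<^sub>R (y - z)" for i
    by (simp add: p_def algebra_simps add_divide_distrib)
  have small: "norm (y - z) / real N < e"
    using N Npos e by (simp add: field_simps)
  have "(g (p i) - g z) \<bullet> (y - z) \<ge> \<mu> * (real i / real N) * (norm (y - z))\<^sup>2" if "i \<le> N" for i
    using that
  proof (induction i)
    case 0 then show ?case by (simp add: p_def)
  next
    case (Suc i)
    have pi: "p i \<in> K" using Suc pK by simp
    have "dist (p i) (p (Suc i)) = norm (p (Suc i) - p i)"
      by (simp add: dist_norm norm_minus_commute)
    also have "\<dots> = norm (y - z) / real N"
      using step[of i] Npos by simp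
    finally have "dist (p i) (p (Suc i)) = norm (y - z) / real N" .
    then have "p (Suc i) \<in> ball (p i) e" using small by simp
    moreover have "p i \<in> ball (p i) e" using e by simp
    ultimately have "(g (p (Suc i)) - g (p i)) \<bullet> (p (Suc i) - p i) \<ge> \<mu> * (norm (p (Suc i) - p i))\<^sup>2"
      using loc[OF pi] by blast
    then have "(g (p (Suc i)) - g (p i)) \<bullet> ((1 / real N) *\<^sub>R (y - z)) \<ge> \<mu> * (norm ((1 / real N) *\<^sub>R (y - z)))\<^sup>2"
      by (simp add: step)
    then have "(1 / real N) * ((g (p (Suc i)) - g (p i)) \<bullet> (y - z)) \<ge> \<mu> * ((1 / real N)\<^sup>2 * (norm (y - z))\<^sup>2)"
      by (simp add: power_divide)
    then have A: "(g (p (Suc i)) - g (p i)) \<bullet> (y - z) \<ge> \<mu> * (1 / real N) * (norm (y - z))\<^sup>2"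
      using Npos by (simp add: power2_eq_square field_simps)
    have B: "(g (p i) - g z) \<bullet> (y - z) \<ge> \<mu> * (real i / real N) * (norm (y - z))\<^sup>2" using Suc by simp
    have "(g (p (Suc i)) - g z) \<bullet> (y - z) = (g (p (Suc i)) - g (p i)) \<bullet> (y - z) + (g (p i) - g z) \<bullet> (y - z)"
      by (simp add: inner_diff_left)
    also have "\<dots> \<ge> \<mu> * (1 / real N) * (norm (y - z))\<^sup>2 + \<mu> * (real i / real N) * (norm (y - z))\<^sup>2"
      using A B by linarith
    also have "\<mu> * (1 / real N) * (norm (y - z))\<^sup>2 + \<mu> * (real i / real N) * (norm (y - z))\<^sup>2
        = \<mu> * (real (Suc i) / real N) * (norm (y - z))\<^sup>2"
      by (simp add: field_simps add_divide_distrib)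
    finally show ?case .
  qed
  from this[of N] have "(g (p N) - g z) \<bullet> (y - z) \<ge> \<mu> * (norm (y - z))\<^sup>2" using Npos by simp
  moreover have "p N = y" using Npos by (simp add: p_def)
  ultimately show ?thesis by simp
qed

lemma uniform_mono:
  fixes g :: "'a::real_inner \<Rightarrow> 'a"
  assumes loc: "\<forall>x. \<exists>\<delta>>0. \<exists>\<mu>>0. \<forall>y\<in>ball x \<delta>. \<forall>z\<in>ball x \<delta>. (g y - g z) \<bullet> (y - z) \<ge> \<mu> * (norm (y - z))\<^sup>2"
    and K: "compact K" "convex K"
  shows "\<exists>\<mu>>0. \<forall>y\<in>K. \<forall>z\<in>K. (g y - g z) \<bullet> (y - z) \<ge> \<mu> * (norm (y - z))\<^sup>2"
proof (cases "K = {}")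
  case True then show ?thesis by (rule_tac x=1 in exI) auto
next
  case False
  from loc obtain \<delta> \<mu> where dm: "\<And>x. \<delta> x > 0" "\<And>x. \<mu> x > 0"
    "\<And>x y z. y \<in> ball x (\<delta> x) \<Longrightarrow> z \<in> ball x (\<delta> x) \<Longrightarrow> (g y - g z) \<bullet> (y - z) \<ge> \<mu> x * (norm (y - z))\<^sup>2"
    by metis
  have "K \<subseteq> (\<Union>x\<in>K. ball x (\<delta> x))" using dm(1) by force
  then obtain T where T: "T \<subseteq> K" "finite T" "K \<subseteq> (\<Union>x\<in>T. ball x (\<delta> x))"
    using compactE_image[OF K(1), of K "\<lambda>x. ball x (\<delta> x)"] by auto
  have Tne: "T \<noteq> {}" using T False by auto
  obtain e where e: "e > 0" "\<And>p. p \<in> K \<Longrightarrow> \<exists>G \<in> (\<lambda>x. ball x (\<delta> x)) ` T. ball p e \<subseteq> G"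
    using Heine_Borel_lemma[OF K(1) T(3)] by auto
  define m where "m = Min (\<mu> ` T)"
  have mpos: "m > 0" using T(2) Tne dm(2) by (simp add: m_def)
  have mle: "m \<le> \<mu> x" if "x \<in> T" for x using T(2) that by (simp add: m_def)
  have "(g y - g z) \<bullet> (y - z) \<ge> m * (norm (y - z))\<^sup>2" if "y \<in> K" "z \<in> K" for y z
  proof (rule chain_mono[OF _ K(2) that e(1)])
    fix p y z assume p: "p \<in> K" "y \<in> ball p e" "z \<in> ball p e"
    obtain x where x: "x \<in> T" "ball p e \<subseteq> ball x (\<delta> x)" using e(2)[OF p(1)] by auto
    have "(g y - g z) \<bullet> (y - z) \<ge> \<mu> x * (norm (y - z))\<^sup>2" using dm(3)[of y x z] x p by (meson in_mono)
    moreover have "m * (norm (y - z))\<^sup>2 \<le> \<mu> x * (norm (y - z))\<^sup>2"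
      using mle[OF x(1)] by (simp add: mult_right_mono)
    ultimately show "(g y - g z) \<bullet> (y - z) \<ge> m * (norm (y - z))\<^sup>2" by linarith
  qed
  then show ?thesis using mpos by blast
qed

lemma lsc_mono:
  assumes "loc_strongly_convex f g"
  shows "\<forall>x. \<exists>\<delta>>0. \<exists>\<mu>>0. \<forall>y\<in>ball x \<delta>. \<forall>z\<in>ball x \<delta>. (g y - g z) \<bullet> (y - z) \<ge> \<mu> * (norm (y - z))\<^sup>2"
proof
  fix x
  from assms obtain \<delta> \<mu> where d: "\<delta> > 0" "\<mu> > 0"
    "\<forall>y\<in>ball x \<delta>. \<forall>z\<in>ball x \<delta>. f y \<ge> f z + g z \<bullet> (y - z) + \<mu> / 2 * (norm (y - z))\<^sup>2"
    unfolding loc_strongly_convex_def by blast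
  have "(g y - g z) \<bullet> (y - z) \<ge> \<mu> * (norm (y - z))\<^sup>2" if "y \<in> ball x \<delta>" "z \<in> ball x \<delta>" for y z
  proof -
    have 1: "f y \<ge> f z + g z \<bullet> (y - z) + \<mu> / 2 * (norm (y - z))\<^sup>2" using d(3) that by blast
    have 2: "f z \<ge> f y + g y \<bullet> (z - y) + \<mu> / 2 * (norm (z - y))\<^sup>2" using d(3) that by blast
    have "g y \<bullet> (z - y) = - (g y \<bullet> (y - z))" by (simp add: inner_diff_right)
    moreover have "norm (z - y) = norm (y - z)" by (rule norm_minus_commute)
    ultimately show ?thesis using 1 2 by (simp add: inner_diff_left)
  qed
  then show "\<exists>\<delta>>0. \<exists>\<mu>>0. \<forall>y\<in>ball x \<delta>. \<forall>z\<in>ball x \<delta>. (g y - g z) \<bullet> (y - z) \<ge> \<mu> * (norm (y - z))\<^sup>2"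
    using d(1,2) by blast
qed



lemma hit_bound:
  fixes v :: "nat \<Rightarrow> real"
  assumes c: "c > 0" and r: "0 < r" "r < 1" and eps: "\<epsilon> > 0"
    and v0: "v 0 \<le> c" and vk: "\<And>k. k \<ge> 1 \<Longrightarrow> v k \<le> c * r ^ (k - 1)"
  shows "(\<exists>k. v k \<le> \<epsilon>) \<and> (LEAST k. v k \<le> \<epsilon>) \<le> nat (Mbound \<epsilon> c r)"
proof (cases "c \<le> \<epsilon>")
  case True
  then have "v 0 \<le> \<epsilon>" using v0 by linarith
  then have "(LEAST k. v k \<le> \<epsilon>) = 0" by (simp add: Least_eq_0)
  then show ?thesis using \<open>v 0 \<le> \<epsilon>\<close> by auto
next
  case False
  define s where "s = (ln (inverse \<epsilon>) + ln c) / ln (inverse r)"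
  have lr: "ln (inverse r) > 0" using r by (simp add: ln_inverse)
  have num: "ln (inverse \<epsilon>) + ln c = ln (c / \<epsilon>)"
    using c eps by (simp add: ln_inverse ln_div)
  have "ln (c / \<epsilon>) > 0" using False eps by simp
  then have spos: "s > 0" using lr num by (simp add: s_def)
  define n where "n = nat \<lceil>s\<rceil>"
  have ns: "real n \<ge> s" using spos by (simp add: n_def)
  have M: "nat (Mbound \<epsilon> c r) = Suc n"
  proof -
    have "Mbound \<epsilon> c r = \<lceil>s\<rceil> + 1" by (simp add: Mbound_def s_def)
    moreover have "\<lceil>s\<rceil> \<ge> 1" using spos by simp
    ultimately show ?thesis by (simp add: n_def nat_add_distrib)
  qed
  have "v (Suc n) \<le> c * r ^ n" using vk[of "Suc n"] by simp
  also have "r ^ n = r powr (real n)" using r by (simp add: powr_realpow)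
  also have "\<dots> \<le> r powr s" using ns r by (intro powr_mono') auto
  also have "r powr s = \<epsilon> / c"
  proof -
    have "r powr s = exp (s * ln r)" using r by (simp add: powr_def)
    also have "s * ln r = - ln (c / \<epsilon>)"
      using lr num by (simp add: s_def ln_inverse)
    also have "exp (- ln (c / \<epsilon>)) = \<epsilon> / c"
      using c eps by (simp add: exp_minus)
    finally show ?thesis .
  qed
  finally have "v (Suc n) \<le> c * (\<epsilon> / c)" using c by (simp add: mult_left_mono)
  then have hit: "v (Suc n) \<le> \<epsilon>" using c by simp
  then have "(LEAST k. v k \<le> \<epsilon>) \<le> Suc n" by (rule Least_le)
  then show ?thesis using hit M by auto
qed



lemma energy_step:
  fixes x0 x1 xs g0 g1 :: "'a::real_inner"
  assumes x1: "x1 = x0 - t0 *\<^sub>R g0"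
    and t0: "t0 > 0" and t1: "t1 > 0" and th1: "th1 = t1 / t0"
    and lip: "t1 * norm (g1 - g0) \<le> \<omega> * norm (x1 - x0)"
    and grow: "t1 \<le> t0 * sqrt (2 * (1 - \<omega>\<^sup>2) + th0 / \<tau>)"
    and th0: "th0 > 0" and tau: "\<tau> > 0"
    and cvx: "F1 \<le> F0 + g1 \<bullet> (x1 - x0)"
    and mon: "(g1 - g0) \<bullet> (x1 - x0) \<ge> 0"
    and F0: "F0 \<ge> 0" and om: "\<omega> > 0" "\<omega>\<^sup>2 < 1"
    and A: "A = 1 / (1 - \<omega>\<^sup>2)"
  shows "(norm (x1 - xs))\<^sup>2 + A * ((t1 * norm g1)\<^sup>2 + t1 * th1 * F1)
      \<le> (norm (x0 - xs))\<^sup>2 - 2 * t0 * (g0 \<bullet> (x0 - xs) - F0) + A * (t0 * norm g0)\<^sup>2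
         + A * (t0 * th0 * F0) / \<tau>"
proof -
  define P where "P = (g1 - g0) \<bullet> (x1 - x0)"
  define G where "G = norm (g1 - g0)"
  have Apos: "A > 0" using A om by simp
  have hX: "(norm (x1 - xs))\<^sup>2 = (norm (x0 - xs))\<^sup>2 - 2 * t0 * (g0 \<bullet> (x0 - xs)) + t0\<^sup>2 * (norm g0)\<^sup>2"
    unfolding x1 power2_norm_eq_inner
    by (simp add: inner_diff_left inner_diff_right algebra_simps power2_eq_square inner_commute)
  have gP: "g0 \<bullet> (g1 - g0) = - P / t0"
    using t0 unfolding P_def x1 by (simp add: inner_commute)
  have hG: "(norm g1)\<^sup>2 = (norm g0)\<^sup>2 + 2 * (g0 \<bullet> (g1 - g0)) + G\<^sup>2"
  proof -
    have "g1 = g0 + (g1 - g0)" by simp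
    then have "(norm g1)\<^sup>2 = (g0 + (g1 - g0)) \<bullet> (g0 + (g1 - g0))"
      by (metis power2_norm_eq_inner)
    also have "\<dots> = (norm g0)\<^sup>2 + 2 * (g0 \<bullet> (g1 - g0)) + G\<^sup>2"
      unfolding G_def power2_norm_eq_inner
      by (simp only: inner_add_left inner_add_right inner_commute[of "g1 - g0" g0])
    finally show ?thesis .
  qed
  have hb1: "(t1 * norm g1)\<^sup>2 = t1\<^sup>2 * (norm g0)\<^sup>2 - 2 * t1\<^sup>2 * P / t0 + t1\<^sup>2 * G\<^sup>2"
  proof -
    have "(t1 * norm g1)\<^sup>2 = t1\<^sup>2 * (norm g1)\<^sup>2" by (simp add: power_mult_distrib)
    also have "\<dots> = t1\<^sup>2 * ((norm g0)\<^sup>2 + 2 * (- P / t0) + G\<^sup>2)" using hG gP by simp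
    also have "\<dots> = t1\<^sup>2 * (norm g0)\<^sup>2 - 2 * t1\<^sup>2 * P / t0 + t1\<^sup>2 * G\<^sup>2"
      by (simp add: algebra_simps)
    finally show ?thesis .
  qed
  have g1d: "g1 \<bullet> (x1 - x0) = - t0 * (norm g0)\<^sup>2 + P"
  proof -
    have "g1 \<bullet> (x1 - x0) = g0 \<bullet> (x1 - x0) + P" unfolding P_def by (simp add: inner_diff_left)
    moreover have "g0 \<bullet> (x1 - x0) = - t0 * (norm g0)\<^sup>2" unfolding x1 by (simp add: power2_norm_eq_inner)
    ultimately show ?thesis by simp
  qed
  have F1b: "F1 \<le> F0 - t0 * (norm g0)\<^sup>2 + P" using cvx g1d by simp
  have tt: "t1 * th1 = t1\<^sup>2 / t0" using th1 by (simp add: power2_eq_square)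
  have hF: "t1 * th1 * F1 \<le> t1\<^sup>2 / t0 * F0 - t1\<^sup>2 * (norm g0)\<^sup>2 + t1\<^sup>2 * P / t0"
  proof -
    have "t1 * th1 * F1 \<le> t1\<^sup>2 / t0 * (F0 - t0 * (norm g0)\<^sup>2 + P)"
      using F1b t0 t1 tt by (simp add: mult_left_mono divide_right_mono)
    also have "\<dots> = t1\<^sup>2 / t0 * F0 - t1\<^sup>2 * (norm g0)\<^sup>2 + t1\<^sup>2 * P / t0"
      using t0 by (simp add: field_simps)
    finally show ?thesis .
  qed
  have Ppos: "P \<ge> 0" using mon by (simp add: P_def)
  have tG: "t1\<^sup>2 * G\<^sup>2 \<le> \<omega>\<^sup>2 * (t0 * norm g0)\<^sup>2"
  proof -
    have "norm (x1 - x0) = t0 * norm g0" using t0 unfolding x1 by simp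
    then have "t1 * G \<le> \<omega> * (t0 * norm g0)" using lip by (simp add: G_def)
    moreover have "t1 * G \<ge> 0" using t1 by (simp add: G_def)
    ultimately have "(t1 * G)\<^sup>2 \<le> (\<omega> * (t0 * norm g0))\<^sup>2" by (rule power_mono)
    then show ?thesis by (simp add: power_mult_distrib)
  qed
  have S: "(sqrt (2 * (1 - \<omega>\<^sup>2) + th0 / \<tau>))\<^sup>2 = 2 * (1 - \<omega>\<^sup>2) + th0 / \<tau>"
    using th0 tau om by simp
  have t1sq: "t1\<^sup>2 \<le> t0\<^sup>2 * (2 * (1 - \<omega>\<^sup>2) + th0 / \<tau>)"
  proof -
    have "t1\<^sup>2 \<le> (t0 * sqrt (2 * (1 - \<omega>\<^sup>2) + th0 / \<tau>))\<^sup>2" using grow t1 by (simp add: power_mono)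
    then show ?thesis using S by (simp add: power_mult_distrib)
  qed
  have hF2: "t1\<^sup>2 / t0 * F0 \<le> t0 * (2 * (1 - \<omega>\<^sup>2) + th0 / \<tau>) * F0"
  proof -
    have "t1\<^sup>2 / t0 \<le> t0 * (2 * (1 - \<omega>\<^sup>2) + th0 / \<tau>)"
      using t1sq t0 by (simp add: field_simps power2_eq_square)
    then show ?thesis using F0 by (rule mult_right_mono)
  qed
  have key: "(t1 * norm g1)\<^sup>2 + t1 * th1 * F1 \<le> \<omega>\<^sup>2 * (t0 * norm g0)\<^sup>2 + t0 * (2 * (1 - \<omega>\<^sup>2) + th0 / \<tau>) * F0"
  proof -
    have "t1\<^sup>2 * P / t0 \<ge> 0" using Ppos t0 by simp
    then show ?thesis using hb1 hF tG hF2 by linarith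
  qed
  have "A * ((t1 * norm g1)\<^sup>2 + t1 * th1 * F1) \<le> A * (\<omega>\<^sup>2 * (t0 * norm g0)\<^sup>2 + t0 * (2 * (1 - \<omega>\<^sup>2) + th0 / \<tau>) * F0)"
    using key Apos by (simp add: mult_left_mono)
  also have "\<dots> = (A - 1) * (t0 * norm g0)\<^sup>2 + 2 * t0 * F0 + A * (t0 * th0 * F0) / \<tau>"
  proof -
    have e1: "A * \<omega>\<^sup>2 = A - 1" and e2: "A * (1 - \<omega>\<^sup>2) = 1" using A om by (simp_all add: field_simps)
    have "A * (\<omega>\<^sup>2 * (t0 * norm g0)\<^sup>2 + t0 * (2 * (1 - \<omega>\<^sup>2) + th0 / \<tau>) * F0)
       = (A * \<omega>\<^sup>2) * (t0 * norm g0)\<^sup>2 + 2 * (A * (1 - \<omega>\<^sup>2)) * t0 * F0 + A * (t0 * th0 * F0) / \<tau>"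
      by (simp add: algebra_simps add_divide_distrib)
    also have "\<dots> = (A - 1) * (t0 * norm g0)\<^sup>2 + 2 * t0 * F0 + A * (t0 * th0 * F0) / \<tau>"
      by (simp only: e1 e2)
    finally show ?thesis .
  qed
  finally show ?thesis using hX by (simp add: algebra_simps power_mult_distrib)
qed



lemma sc_W:
  fixes f :: "'a::real_inner \<Rightarrow> real"
  assumes grad: "\<And>z. (f has_derivative (\<lambda>h. g z \<bullet> h)) (at z)"
    and W: "convex W" and mu: "\<And>y z. y \<in> W \<Longrightarrow> z \<in> W \<Longrightarrow> \<mu> * (norm (y - z))\<^sup>2 \<le> (g y - g z) \<bullet> (y - z)"
    and y: "y \<in> W" and z: "z \<in> W"
  shows "f y \<ge> f z + g z \<bullet> (y - z) + \<mu> / 2 * (norm (y - z))\<^sup>2"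
proof (rule quad_bound_below[OF grad])
  fix s :: real assume s: "0 \<le> s" "s \<le> 1"
  show "(g (z + s *\<^sub>R (y - z)) - g z) \<bullet> (y - z) \<ge> \<mu> * s * (norm (y - z))\<^sup>2"
  proof (cases "s = 0")
    case True then show ?thesis by simp
  next
    case False
    then have sp: "s > 0" using s by simp
    let ?p = "z + s *\<^sub>R (y - z)"
    have "?p = (1 - s) *\<^sub>R z + s *\<^sub>R y" by (simp add: algebra_simps)
    then have pW: "?p \<in> W" using convexD_alt[OF W z y] s by simp
    have "\<mu> * (norm (?p - z))\<^sup>2 \<le> (g ?p - g z) \<bullet> (?p - z)" by (rule mu[OF pW z])
    then have "\<mu> * (s\<^sup>2 * (norm (y - z))\<^sup>2) \<le> s * ((g ?p - g z) \<bullet> (y - z))"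
      using sp by (simp add: power_mult_distrib)
    then have "s * (\<mu> * s * (norm (y - z))\<^sup>2) \<le> s * ((g ?p - g z) \<bullet> (y - z))"
      by (simp add: power2_eq_square algebra_simps)
    then show ?thesis using sp by simp
  qed
qed

lemma desc_W:
  fixes f :: "'a::real_inner \<Rightarrow> real"
  assumes grad: "\<And>z. (f has_derivative (\<lambda>h. g z \<bullet> h)) (at z)"
    and W: "convex W" and lip: "L-lipschitz_on W g"
    and y: "y \<in> W" and z: "z \<in> W"
  shows "f y \<le> f z + g z \<bullet> (y - z) + L / 2 * (norm (y - z))\<^sup>2"
proof -
  have gradm: "((\<lambda>x. - f x) has_derivative (\<lambda>h. (- g x) \<bullet> h)) (at x)" for x
    using has_derivative_minus[OF grad[of x]] by simp
  have "- f y \<ge> - f z + (- g z) \<bullet> (y - z) + (- L) / 2 * (norm (y - z))\<^sup>2"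
  proof (rule quad_bound_below[OF gradm])
    fix s :: real assume s: "0 \<le> s" "s \<le> 1"
    let ?p = "z + s *\<^sub>R (y - z)"
    have "?p = (1 - s) *\<^sub>R z + s *\<^sub>R y" by (simp add: algebra_simps)
    then have pW: "?p \<in> W" using convexD_alt[OF W z y] s by simp
    have "norm (g ?p - g z) \<le> L * norm (?p - z)"
      using lipschitz_onD[OF lip pW z] by (simp add: dist_norm)
    also have "\<dots> = L * s * norm (y - z)" using s by simp
    finally have n1: "norm (g ?p - g z) \<le> L * s * norm (y - z)" .
    have "(g ?p - g z) \<bullet> (y - z) \<le> norm (g ?p - g z) * norm (y - z)" by (rule norm_cauchy_schwarz)
    also have "\<dots> \<le> L * s * norm (y - z) * norm (y - z)" using n1 by (simp add: mult_right_mono)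
    finally have "(g ?p - g z) \<bullet> (y - z) \<le> L * s * (norm (y - z))\<^sup>2" by (simp add: power2_eq_square)
    then show "(- g ?p - - g z) \<bullet> (y - z) \<ge> - L * s * (norm (y - z))\<^sup>2"
      by (simp add: inner_diff_left)
  qed
  then show ?thesis by simp
qed

lemma coco_W:
  fixes f :: "'a::real_inner \<Rightarrow> real"
  assumes grad: "\<And>z. (f has_derivative (\<lambda>h. g z \<bullet> h)) (at z)"
    and conv: "convex_on UNIV f"
    and W: "convex W" and lip: "L-lipschitz_on W g" and L: "L > 0"
    and xs: "xs \<in> W" and gxs: "g xs = 0" and zW: "xs + (1 / L) *\<^sub>R g xk \<in> W"
  shows "g xk \<bullet> (xk - xs) \<ge> f xk - f xs + (norm (g xk))\<^sup>2 / (2 * L)"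
proof -
  let ?z = "xs + (1 / L) *\<^sub>R g xk"
  have h1: "f ?z \<le> f xs + g xs \<bullet> (?z - xs) + L / 2 * (norm (?z - xs))\<^sup>2"
    by (rule desc_W[OF grad W lip zW xs])
  have "norm (?z - xs) = norm (g xk) / L" using L by simp
  then have "L / 2 * (norm (?z - xs))\<^sup>2 = (norm (g xk))\<^sup>2 / (2 * L)"
    using L by (simp add: power_divide power2_eq_square)
  then have h1b: "f ?z \<le> f xs + (norm (g xk))\<^sup>2 / (2 * L)"
    using h1 gxs by simp
  have h2: "f ?z \<ge> f xk + g xk \<bullet> (?z - xk)" by (rule grad_ineq[OF conv grad])
  have "g xk \<bullet> (?z - xk) = g xk \<bullet> (xs - xk) + (norm (g xk))\<^sup>2 / L"
    by (simp add: inner_diff_right inner_add_right power2_norm_eq_inner)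
  then have "f xk + g xk \<bullet> (xs - xk) + (norm (g xk))\<^sup>2 / L \<le> f xs + (norm (g xk))\<^sup>2 / (2 * L)"
    using h1b h2 by linarith
  moreover have "g xk \<bullet> (xs - xk) = - (g xk \<bullet> (xk - xs))" by (simp add: inner_diff_right)
  moreover have "(norm (g xk))\<^sup>2 / L = (norm (g xk))\<^sup>2 / (2 * L) + (norm (g xk))\<^sup>2 / (2 * L)"
    using L by (simp add: field_simps)
  ultimately show ?thesis by linarith
qed



lemma min_mult_pos: "(z::real) > 0 \<Longrightarrow> min u v * z = min (u * z) (v * z)"
  by (simp add: min_def mult_le_cancel_right)

lemma alpha_next_mul:
  assumes gp: "g' > 0"
  shows "adasga_alpha_next \<omega> \<tau> a gp th g' L * g' =
    (if L = 0 then a * gp * sqrt (2 * (1 - \<omega>\<^sup>2) + th / \<tau>)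
     else min (a * gp * sqrt (2 * (1 - \<omega>\<^sup>2) + th / \<tau>)) (\<omega> / L))"
proof -
  let ?S = "sqrt (2 * (1 - \<omega>\<^sup>2) + th / \<tau>)"
  have e1: "a * gp / g' * ?S * g' = a * gp * ?S" using gp by simp
  have e2: "\<omega> / (g' * L) * g' = \<omega> / L" using gp by simp
  show ?thesis
  proof (cases "L = 0")
    case True then show ?thesis using e1 by (simp add: adasga_alpha_next_def Let_def)
  next
    case False
    have "min (a * gp / g' * ?S) (\<omega> / (g' * L)) * g' = min (a * gp / g' * ?S * g') (\<omega> / (g' * L) * g')"
      using gp by (rule min_mult_pos)
    then show ?thesis using False e1 e2 by (simp add: adasga_alpha_next_def Let_def)
  qed
qed


theorem theorem4p7:
  fixes f :: "'a::euclidean_space \<Rightarrow> real"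
    and g :: "'a \<Rightarrow> 'a"
    and x :: "nat \<Rightarrow> 'a"
    and \<alpha> \<theta> \<gamma> :: "nat \<Rightarrow> real"
    and \<tau> \<omega> \<gamma>min \<gamma>max R LW \<epsilon> :: real
  assumes conv: "convex_on UNIV f"
    and grad: "\<And>z. (f has_derivative (\<lambda>h. g z \<bullet> h)) (at z)"
    and grad_cont: "continuous_on UNIV g"
    and lsc: "loc_strongly_convex f g"
    and llip: "loc_lipschitz g"
    and nonempty: "argmin_set f \<noteq> {}"
    and alpha0: "\<alpha> 0 > 0" and theta0: "\<theta> 0 > 0"
    and tau: "\<tau> > 1"
    and omega: "0 < \<omega>" "\<omega> \<le> 1 / sqrt 2"
    and gamma_bounds: "0 < \<gamma>min" "\<gamma>min \<le> \<gamma>max" "\<And>k. \<gamma> k \<in> {\<gamma>min..\<gamma>max}"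
    and x_rec: "\<And>k. x (Suc k) = x k - (\<alpha> k * \<gamma> k) *\<^sub>R g (x k)"
    and alpha_rec: "\<And>k. \<alpha> (Suc k) =
          adasga_alpha_next \<omega> \<tau> (\<alpha> k) (\<gamma> k) (\<theta> k) (\<gamma> (Suc k)) (adasga_L g x (Suc k))"
    and theta_rec: "\<And>k. \<theta> (Suc k) = \<alpha> (Suc k) * \<gamma> (Suc k) / (\<alpha> k * \<gamma> k)"
    and R: "R > 3 * sqrt ((infdist (x 0) (argmin_set f))\<^sup>2
              + 2 * (\<alpha> 0)\<^sup>2 * (\<gamma> 0)\<^sup>2 * (norm (g (x 0)))\<^sup>2
              + 2 * \<alpha> 0 * \<gamma> 0 * \<theta> 0 * (f (x 0) - opt_val f)) 
             + infdist (x 0) (argmin_set f) + norm (x 0)"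
    and LW: "LW > 0" "LW-lipschitz_on (cball 0 R) g"
    and eps: "\<epsilon> > 0"
  shows "let fstar = opt_val f; X = argmin_set f; W = cball (0::'a) R;
             \<eta> = (infdist (x 0) X)\<^sup>2 + 2 * (\<alpha> 0)\<^sup>2 * (\<gamma> 0)\<^sup>2 * (norm (g (x 0)))\<^sup>2
                 + 2 * \<alpha> 0 * \<gamma> 0 * \<theta> 0 * (f (x 0) - fstar);
             \<mu>W = Inf {(g y - g z) \<bullet> (y - z) / (norm (y - z))\<^sup>2 | y z. y \<in> W \<and> z \<in> W \<and> y \<noteq> z};
             m = min (\<alpha> 0 * \<gamma> 0 * \<mu>W / \<omega>) (\<mu>W / LW);
             q = min (min (\<mu>W / 2 * min (\<alpha> 0 * \<gamma> 0) (\<omega> / LW))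
                          (\<mu>W * (1 - \<omega>\<^sup>2) / (2 * \<omega>^3 * LW + \<mu>W * (1 - \<omega>\<^sup>2))))
                     ((\<tau> - 1) * m / (\<tau> * (2 * (1 - \<omega>\<^sup>2) + m)));
             c1 = sqrt ((R + norm (x 0))\<^sup>2 + \<eta>);
             c2 = \<omega> * LW\<^sup>2 * c1\<^sup>2 / (\<mu>W * min ((\<alpha> 0)\<^sup>2 * (\<gamma> 0)\<^sup>2 * LW\<^sup>2) (\<omega>\<^sup>2));
             c3 = sqrt (2 * c1\<^sup>2 * (1 - \<omega>\<^sup>2) * \<omega> * LW^3)
                  / (sqrt (2 * \<omega>\<^sup>2 * LW + (1 - \<omega>\<^sup>2) * \<mu>W) * min (\<alpha> 0 * \<gamma> 0 * LW) \<omega>)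
         in \<exists>xs\<in>X.
              ((\<exists>k. norm (x k - xs) \<le> \<epsilon>) \<and>
                 (LEAST k. norm (x k - xs) \<le> \<epsilon>) \<le> nat (Mbound \<epsilon> c1 (sqrt (1 - q)))) \<and>
              ((\<exists>k. f (x k) - fstar \<le> \<epsilon>) \<and>
                 (LEAST k. f (x k) - fstar \<le> \<epsilon>) \<le> nat (Mbound \<epsilon> c2 (1 - q))) \<and>
              ((\<exists>k. norm (g (x k)) \<le> \<epsilon>) \<and>
                 (LEAST k. norm (g (x k)) \<le> \<epsilon>) \<le> nat (Mbound \<epsilon> c3 (sqrt (1 - q))))"
proof -
  have om2: "\<omega>\<^sup>2 \<le> 1 / 2"
  proof -
    have "\<omega>\<^sup>2 \<le> (1 / sqrt 2)\<^sup>2" using omega by (intro power_mono) auto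
    then show ?thesis by (simp add: power_divide)
  qed
  have om2lt: "\<omega>\<^sup>2 < 1" using om2 by simp
  have om1: "\<omega> < 1" using power_less_imp_less_base[of \<omega> 2 1] om2lt by simp
  define A where "A = 1 / (1 - \<omega>\<^sup>2)"
  have Apos: "A > 0" using om2lt by (simp add: A_def)
  have A2: "A \<le> 2" using om2 om2lt by (simp add: A_def field_simps)
  define X where "X = argmin_set f"
  define fstar where "fstar = opt_val f"
  have fcont: "continuous_on UNIV f"
    using grad by (meson continuous_at_imp_continuous_on has_derivative_continuous)
  have closedX: "closed X"
  proof -
    have "X = (\<Inter>y. {z. f z \<le> f y})" by (auto simp: X_def argmin_set_def)
    moreover have "closed {z. f z \<le> f y}" for y
      using fcont by (intro closed_Collect_le continuous_on_const) auto
    ultimately show ?thesis by auto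
  qed
  obtain xs where xsX: "xs \<in> X" and xsd: "infdist (x 0) X = dist (x 0) xs"
    using infdist_attains_inf[OF closedX] nonempty unfolding X_def by blast
  have xsmin: "\<And>y. f xs \<le> f y" using xsX by (simp add: X_def argmin_set_def)
  have fstar_eq: "fstar = f xs"
    unfolding fstar_def opt_val_def by (rule cInf_eq_minimum) (auto intro: xsmin)
  have gxs: "g xs = 0"
  proof -
    have "(\<lambda>h. g xs \<bullet> h) = (\<lambda>h. 0)"
      by (rule has_derivative_local_min[OF grad]) (simp add: xsmin)
    then have "g xs \<bullet> g xs = 0" by meson
    then show ?thesis by simp
  qed
  have gpos: "\<And>k. \<gamma> k > 0" using gamma_bounds by (meson atLeastAtMost_iff less_le_trans)
  define S where "S k = sqrt (2 * (1 - \<omega>\<^sup>2) + \<theta> k / \<tau>)" for k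
  define t where "t k = \<alpha> k * \<gamma> k" for k
  define Lk where "Lk k = adasga_L g x k" for k
  have pos: "\<alpha> k > 0 \<and> \<theta> k > 0" for k
  proof (induction k)
    case 0 then show ?case using alpha0 theta0 by simp
  next
    case (Suc k)
    have "\<theta> k / \<tau> > 0" using Suc tau by simp
    then have Sp: "S k > 0" using om2lt by (simp add: S_def)
    have Lnn: "Lk (Suc k) \<ge> 0" by (simp add: Lk_def adasga_L_def)
    have "\<alpha> (Suc k) * \<gamma> (Suc k) = (if Lk (Suc k) = 0 then \<alpha> k * \<gamma> k * S k else min (\<alpha> k * \<gamma> k * S k) (\<omega> / Lk (Suc k)))"
      using alpha_next_mul[OF gpos[of "Suc k"]] alpha_rec[of k] by (simp add: S_def Lk_def)
    moreover have "\<alpha> k * \<gamma> k * S k > 0" using Suc gpos[of k] Sp by simp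
    moreover have "Lk (Suc k) \<noteq> 0 \<Longrightarrow> \<omega> / Lk (Suc k) > 0" using Lnn omega(1) by simp
    ultimately have "\<alpha> (Suc k) * \<gamma> (Suc k) > 0" by (auto split: if_splits)
    then have a: "\<alpha> (Suc k) > 0" using gpos[of "Suc k"] by (simp add: zero_less_mult_iff)
    have "\<theta> (Suc k) > 0" using theta_rec[of k] a gpos Suc by simp
    then show ?case using a by simp
  qed
  have tpos: "\<And>k. t k > 0" using pos gpos by (simp add: t_def)
  have thpos: "\<And>k. \<theta> k > 0" using pos by simp
  have S1: "\<And>k. S k \<ge> 1"
  proof -
    fix k
    have "\<theta> k / \<tau> > 0" using thpos[of k] tau by simp
    then have "1 \<le> 2 * (1 - \<omega>\<^sup>2) + \<theta> k / \<tau>" using om2 by simp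
    then show "S k \<ge> 1" by (simp add: S_def)
  qed
  have tstep: "t (Suc k) = (if Lk (Suc k) = 0 then t k * S k else min (t k * S k) (\<omega> / Lk (Suc k)))" for k
    using alpha_next_mul[OF gpos[of "Suc k"]] alpha_rec[of k] by (simp add: S_def Lk_def t_def)
  have thstep: "\<theta> (Suc k) = t (Suc k) / t k" for k using theta_rec by (simp add: t_def)
  have xstep: "x (Suc k) = x k - t k *\<^sub>R g (x k)" for k using x_rec by (simp add: t_def)
  have grow: "t (Suc k) \<le> t k * S k" for k using tstep[of k] by simp
  have lipstep: "t (Suc k) * norm (g (x (Suc k)) - g (x k)) \<le> \<omega> * norm (x (Suc k) - x k)" for k
  proof (cases "x (Suc k) = x k")
    case True then show ?thesis by simp
  next
    case False
    then have np: "norm (x (Suc k) - x k) > 0" by simp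
    show ?thesis
    proof (cases "g (x (Suc k)) = g (x k)")
      case True then show ?thesis using omega(1) by simp
    next
      case False
      then have L: "Lk (Suc k) = norm (g (x (Suc k)) - g (x k)) / norm (x (Suc k) - x k)" "Lk (Suc k) > 0"
        using np by (simp_all add: Lk_def adasga_L_def)
      have Lne: "Lk (Suc k) \<noteq> 0" using L(2) by simp
      have "t (Suc k) = min (t k * S k) (\<omega> / Lk (Suc k))" using tstep[of k] Lne by (simp only: if_False)
      then have "t (Suc k) \<le> \<omega> / Lk (Suc k)" by simp
      then have "t (Suc k) * Lk (Suc k) \<le> \<omega>" using L(2) by (simp add: field_simps)
      then show ?thesis using L np by (simp add: field_simps)
    qed
  qed
  define F where "F k = f (x k) - f xs" for k
  define E where "E k = (norm (x k - xs))\<^sup>2 + A * ((t k * norm (g (x k)))\<^sup>2 + t k * \<theta> k * F k)" for k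
  have Fnn: "\<And>k. F k \<ge> 0" using xsmin by (simp add: F_def)
  have Estep: "E (Suc k) \<le> (norm (x k - xs))\<^sup>2 - 2 * t k * (g (x k) \<bullet> (x k - xs) - F k)
      + A * (t k * norm (g (x k)))\<^sup>2 + A * (t k * \<theta> k * F k) / \<tau>" for k
  proof -
    have cvx: "F (Suc k) \<le> F k + g (x (Suc k)) \<bullet> (x (Suc k) - x k)"
    proof -
      have "f (x k) \<ge> f (x (Suc k)) + g (x (Suc k)) \<bullet> (x k - x (Suc k))" by (rule grad_ineq[OF conv grad])
      moreover have "g (x (Suc k)) \<bullet> (x k - x (Suc k)) = - (g (x (Suc k)) \<bullet> (x (Suc k) - x k))"
        by (simp add: inner_diff_right)
      ultimately show ?thesis by (simp add: F_def)
    qed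
    have mon: "(g (x (Suc k)) - g (x k)) \<bullet> (x (Suc k) - x k) \<ge> 0"
    proof -
      have 1: "f (x k) \<ge> f (x (Suc k)) + g (x (Suc k)) \<bullet> (x k - x (Suc k))" by (rule grad_ineq[OF conv grad])
      have 2: "f (x (Suc k)) \<ge> f (x k) + g (x k) \<bullet> (x (Suc k) - x k)" by (rule grad_ineq[OF conv grad])
      have "g (x (Suc k)) \<bullet> (x k - x (Suc k)) = - (g (x (Suc k)) \<bullet> (x (Suc k) - x k))"
        by (simp add: inner_diff_right)
      then show ?thesis using 1 2 by (simp add: inner_diff_left)
    qed
    have "E (Suc k) = (norm (x (Suc k) - xs))\<^sup>2 + A * ((t (Suc k) * norm (g (x (Suc k))))\<^sup>2 + t (Suc k) * \<theta> (Suc k) * F (Suc k))"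
      by (simp add: E_def)
    also have "\<dots> \<le> (norm (x k - xs))\<^sup>2 - 2 * t k * (g (x k) \<bullet> (x k - xs) - F k)
      + A * (t k * norm (g (x k)))\<^sup>2 + A * (t k * \<theta> k * F k) / \<tau>"
      by (rule energy_step[OF xstep tpos tpos thstep lipstep _ thpos _ cvx mon Fnn omega(1) om2lt A_def])
        (use grow tau in \<open>auto simp: S_def\<close>)
    finally show ?thesis .
  qed
  have cvxI: "\<And>k. g (x k) \<bullet> (x k - xs) \<ge> F k"
  proof -
    fix k
    have "f xs \<ge> f (x k) + g (x k) \<bullet> (xs - x k)" by (rule grad_ineq[OF conv grad])
    moreover have "g (x k) \<bullet> (xs - x k) = - (g (x k) \<bullet> (x k - xs))" by (simp add: inner_diff_right)
    ultimately show "g (x k) \<bullet> (x k - xs) \<ge> F k" by (simp add: F_def)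
  qed
  have Emono: "E (Suc k) \<le> E k" for k
  proof -
    have "2 * t k * (g (x k) \<bullet> (x k - xs) - F k) \<ge> 0" using cvxI[of k] tpos[of k] by simp
    moreover have "A * (t k * \<theta> k * F k) / \<tau> \<le> A * (t k * \<theta> k * F k)"
    proof -
      have "A * (t k * \<theta> k * F k) \<ge> 0" using Apos tpos[of k] thpos[of k] Fnn[of k]
        by (intro mult_nonneg_nonneg) auto
      then have "A * (t k * \<theta> k * F k) / \<tau> \<le> A * (t k * \<theta> k * F k) / 1"
        using tau by (intro divide_left_mono) auto
      then show ?thesis by simp
    qed
    ultimately show ?thesis using Estep[of k] unfolding E_def by (simp only: distrib_left)
  qed
  define eta where "eta = (infdist (x 0) (argmin_set f))\<^sup>2
              + 2 * (\<alpha> 0)\<^sup>2 * (\<gamma> 0)\<^sup>2 * (norm (g (x 0)))\<^sup>2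
              + 2 * \<alpha> 0 * \<gamma> 0 * \<theta> 0 * (f (x 0) - opt_val f)"
  have optv: "opt_val f = f xs" using fstar_eq fstar_def by simp
  have E0: "E 0 \<le> eta"
  proof -
    have d: "(infdist (x 0) (argmin_set f))\<^sup>2 = (norm (x 0 - xs))\<^sup>2"
      using xsd by (simp add: X_def dist_norm)
    have a: "A * (t 0 * norm (g (x 0)))\<^sup>2 \<le> 2 * (\<alpha> 0)\<^sup>2 * (\<gamma> 0)\<^sup>2 * (norm (g (x 0)))\<^sup>2"
    proof -
      have "A * (t 0 * norm (g (x 0)))\<^sup>2 \<le> 2 * (t 0 * norm (g (x 0)))\<^sup>2"
        using A2 by (intro mult_right_mono) auto
      then show ?thesis by (simp add: t_def power_mult_distrib)
    qed
    have b: "A * (t 0 * \<theta> 0 * F 0) \<le> 2 * \<alpha> 0 * \<gamma> 0 * \<theta> 0 * (f (x 0) - opt_val f)"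
    proof -
      have "t 0 * \<theta> 0 * F 0 \<ge> 0" using tpos[of 0] thpos[of 0] Fnn[of 0] by simp
      then have "A * (t 0 * \<theta> 0 * F 0) \<le> 2 * (t 0 * \<theta> 0 * F 0)"
        using A2 by (intro mult_right_mono) auto
      then show ?thesis by (simp add: t_def F_def optv)
    qed
    show ?thesis using d a b unfolding E_def eta_def by (simp only: distrib_left)
  qed
  have Ele: "E k \<le> eta" for k
  proof (induction k)
    case 0 then show ?case using E0 by simp
  next
    case (Suc k) then show ?case using Emono[of k] by simp
  qed
  have XE: "(norm (x k - xs))\<^sup>2 \<le> E k" for k
  proof -
    have "A * ((t k * norm (g (x k)))\<^sup>2 + t k * \<theta> k * F k) \<ge> 0"
      using Apos tpos[of k] thpos[of k] Fnn[of k] by (intro mult_nonneg_nonneg add_nonneg_nonneg) auto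
    then show ?thesis by (simp add: E_def)
  qed
  have eta_nn: "eta \<ge> 0"
  proof -
    have "0 \<le> (norm (x 0 - xs))\<^sup>2" by simp
    then show ?thesis using XE[of 0] Ele[of 0] by linarith
  qed
  have nx: "norm (x k - xs) \<le> sqrt eta" for k
    using XE[of k] Ele[of k] by (simp add: real_le_rsqrt)
  define W where "W = cball (0::'a) R"
  have xsn: "norm xs \<le> norm (x 0) + infdist (x 0) (argmin_set f)"
  proof -
    have "norm (x 0 - (x 0 - xs)) \<le> norm (x 0) + norm (x 0 - xs)" by (rule norm_triangle_ineq4)
    then have "norm xs \<le> norm (x 0) + norm (x 0 - xs)" by simp
    then show ?thesis using xsd by (simp add: X_def dist_norm)
  qed
  have Rb: "norm xs + 3 * sqrt eta < R" using R xsn unfolding eta_def by linarith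
  have inW: "v \<in> W" if "norm (v - xs) \<le> 3 * sqrt eta" for v
  proof -
    have "norm (xs + (v - xs)) \<le> norm xs + norm (v - xs)" by (rule norm_triangle_ineq)
    then have "norm v \<le> norm xs + norm (v - xs)" by simp
    then show ?thesis using that Rb by (simp add: W_def)
  qed
  have seta: "sqrt eta \<ge> 0" using eta_nn by simp
  have xW: "x k \<in> W" for k using nx[of k] seta by (intro inW) linarith
  have xsW: "xs \<in> W" using seta by (intro inW) simp
  have convW: "convex W" by (simp add: W_def)
  have lipW: "LW-lipschitz_on W g" using LW(2) by (simp add: W_def)
  have gle: "norm (g (x k)) \<le> LW * norm (x k - xs)" for k
    using lipschitz_onD[OF lipW xW[of k] xsW] gxs by (simp add: dist_norm)
  have zW: "xs + (1 / LW) *\<^sub>R g (x k) \<in> W" for k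
  proof (rule inW)
    have "norm (xs + (1 / LW) *\<^sub>R g (x k) - xs) = norm (g (x k)) / LW" using LW(1) by simp
    also have "\<dots> \<le> norm (x k - xs)" using gle[of k] LW(1) by (simp add: divide_le_eq mult.commute)
    also have "\<dots> \<le> 3 * sqrt eta" using nx[of k] seta by linarith
    finally show "norm (xs + (1 / LW) *\<^sub>R g (x k) - xs) \<le> 3 * sqrt eta" .
  qed
  have Rpos: "R > 0" using Rb norm_ge_zero[of xs] seta by linarith
  define MS where "MS = {(g y - g z) \<bullet> (y - z) / (norm (y - z))\<^sup>2 | y z. y \<in> W \<and> z \<in> W \<and> y \<noteq> z}"
  define muW where "muW = Inf MS"
  obtain mu0 where mu0: "mu0 > 0" "\<And>y z. y \<in> W \<Longrightarrow> z \<in> W \<Longrightarrow> (g y - g z) \<bullet> (y - z) \<ge> mu0 * (norm (y - z))\<^sup>2"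
    using uniform_mono[OF lsc_mono[OF lsc], of W] by (auto simp: W_def)
  have MSlow: "mu0 \<le> r" if rMS: "r \<in> MS" for r
  proof -
    obtain y z where yz: "y \<in> W" "z \<in> W" "y \<noteq> z" "r = (g y - g z) \<bullet> (y - z) / (norm (y - z))\<^sup>2"
      using rMS unfolding MS_def by blast
    have "(norm (y - z))\<^sup>2 > 0" using yz(3) by simp
    then show ?thesis using mu0(2)[OF yz(1,2)] yz(4) by (simp add: le_divide_eq)
  qed
  obtain e :: 'a where e: "norm e = 1" using norm_Basis SOME_Basis by blast
  define y0 where "y0 = R *\<^sub>R e"
  have y0W: "y0 \<in> W" and y0n: "y0 \<noteq> 0" and y0norm: "norm y0 = R"
    using Rpos e by (auto simp: W_def y0_def)
  have zeroW: "(0::'a) \<in> W" using Rpos by (simp add: W_def)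
  have r0: "(g y0 - g 0) \<bullet> (y0 - 0) / (norm (y0 - 0))\<^sup>2 \<in> MS"
    unfolding MS_def using y0W zeroW y0n by blast
  have MSne: "MS \<noteq> {}" using r0 by blast
  have bddMS: "bdd_below MS" using MSlow by (auto simp: bdd_below_def)
  have mupos: "muW > 0"
  proof -
    have "mu0 \<le> Inf MS" by (rule cInf_greatest[OF MSne MSlow])
    then show ?thesis using mu0(1) by (simp add: muW_def)
  qed
  have mule: "muW * (norm (y - z))\<^sup>2 \<le> (g y - g z) \<bullet> (y - z)" if "y \<in> W" "z \<in> W" for y z
  proof (cases "y = z")
    case True then show ?thesis by simp
  next
    case False
    then have "(g y - g z) \<bullet> (y - z) / (norm (y - z))\<^sup>2 \<in> MS" unfolding MS_def using that by blast
    then have "muW \<le> (g y - g z) \<bullet> (y - z) / (norm (y - z))\<^sup>2"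
      unfolding muW_def by (rule cInf_lower[OF _ bddMS])
    moreover have "(norm (y - z))\<^sup>2 > 0" using False by simp
    ultimately show ?thesis by (simp add: le_divide_eq)
  qed
  have muL: "muW \<le> LW"
  proof -
    have "muW * (norm (y0 - 0))\<^sup>2 \<le> (g y0 - g 0) \<bullet> (y0 - 0)" by (rule mule[OF y0W zeroW])
    also have "\<dots> \<le> norm (g y0 - g 0) * norm (y0 - 0)" by (rule norm_cauchy_schwarz)
    also have "\<dots> \<le> LW * norm (y0 - 0) * norm (y0 - 0)"
      using lipschitz_onD[OF lipW y0W zeroW] by (intro mult_right_mono) (auto simp: dist_norm)
    finally have "muW * (norm y0)\<^sup>2 \<le> LW * (norm y0)\<^sup>2" by (simp add: power2_eq_square)
    then show ?thesis using y0n by simp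
  qed
  define tmin where "tmin = min (\<alpha> 0 * \<gamma> 0) (\<omega> / LW)"
  define m where "m = min (\<alpha> 0 * \<gamma> 0 * muW / \<omega>) (muW / LW)"
  define q where "q = min (min (muW / 2 * min (\<alpha> 0 * \<gamma> 0) (\<omega> / LW))
                          (muW * (1 - \<omega>\<^sup>2) / (2 * \<omega>^3 * LW + muW * (1 - \<omega>\<^sup>2))))
                     ((\<tau> - 1) * m / (\<tau> * (2 * (1 - \<omega>\<^sup>2) + m)))"
  have a0g0: "\<alpha> 0 * \<gamma> 0 > 0" using tpos[of 0] by (simp add: t_def)
  have tminpos: "tmin > 0" using a0g0 omega(1) LW(1) by (simp add: tmin_def)
  have tminle: "tmin \<le> \<omega> / LW" by (simp add: tmin_def)
  have q1: "q \<le> muW / 2 * tmin" unfolding q_def tmin_def by (meson min.cobounded1 order_trans)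
  have mpos: "m > 0" using a0g0 mupos omega(1) LW(1) by (simp add: m_def)
  have c2pos: "2 * (1 - \<omega>\<^sup>2) > 0" using om2lt by simp
  have q3: "q \<le> 1 - 1 / \<tau>"
  proof -
    have "q \<le> (\<tau> - 1) * m / (\<tau> * (2 * (1 - \<omega>\<^sup>2) + m))" unfolding q_def by (rule min.cobounded2)
    also have "\<dots> = ((\<tau> - 1) / \<tau>) * (m / (2 * (1 - \<omega>\<^sup>2) + m))" by simp
    also have "\<dots> \<le> ((\<tau> - 1) / \<tau>) * 1"
    proof (rule mult_left_mono)
      show "m / (2 * (1 - \<omega>\<^sup>2) + m) \<le> 1" using mpos c2pos by simp
      show "0 \<le> (\<tau> - 1) / \<tau>" using tau by simp
    qed
    also have "\<dots> = 1 - 1 / \<tau>" using tau by (simp add: field_simps)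
    finally show ?thesis .
  qed
  have qpos: "q > 0"
  proof -
    have "muW / 2 * min (\<alpha> 0 * \<gamma> 0) (\<omega> / LW) > 0" using mupos a0g0 omega(1) LW(1) by simp
    moreover have "muW * (1 - \<omega>\<^sup>2) / (2 * \<omega>^3 * LW + muW * (1 - \<omega>\<^sup>2)) > 0"
      using mupos om2lt omega(1) LW(1) by (intro divide_pos_pos add_pos_pos mult_pos_pos) auto
    moreover have "(\<tau> - 1) * m / (\<tau> * (2 * (1 - \<omega>\<^sup>2) + m)) > 0"
      using tau mpos c2pos by (intro divide_pos_pos mult_pos_pos add_pos_pos) auto
    ultimately show ?thesis by (simp add: q_def)
  qed
  have qlt1: "q < 1" using q3 tau by (smt (verit) divide_pos_pos)
  have Lnn: "Lk k \<ge> 0" for k by (simp add: Lk_def adasga_L_def)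
  have Lle: "Lk (Suc k) \<le> LW" for k
  proof (cases "x (Suc k) = x k")
    case True then show ?thesis using LW(1) by (simp add: Lk_def adasga_L_def)
  next
    case False
    then have np: "norm (x (Suc k) - x k) > 0" by simp
    have "norm (g (x (Suc k)) - g (x k)) \<le> LW * norm (x (Suc k) - x k)"
      using lipschitz_onD[OF lipW xW xW] by (simp add: dist_norm)
    then show ?thesis using np by (simp add: Lk_def adasga_L_def divide_le_eq)
  qed
  have tmin_le: "tmin \<le> t k" for k
  proof (induction k)
    case 0 then show ?case by (simp add: tmin_def t_def)
  next
    case (Suc k)
    have tS: "t k \<le> t k * S k" using tpos[of k] S1[of k] by simp
    show ?case
    proof (cases "Lk (Suc k) = 0")
      case True then show ?thesis using tstep[of k] Suc tS by simp
    next
      case False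
      then have Lp: "Lk (Suc k) > 0" using Lnn[of "Suc k"] by simp
      have "\<omega> / LW \<le> \<omega> / Lk (Suc k)" using Lle[of k] Lp omega(1) by (intro divide_left_mono) auto
      then have "tmin \<le> \<omega> / Lk (Suc k)" using tminle by linarith
      moreover have "tmin \<le> t k * S k" using Suc tS by linarith
      ultimately show ?thesis using tstep[of k] False by simp
    qed
  qed
  have tmax: "t k \<le> \<omega> / muW" if k1: "k \<ge> 1" and gnz: "g (x k) \<noteq> 0" for k
  proof -
    obtain j where kj: "k = Suc j" using k1 by (cases k) auto
    have neq: "x (Suc j) \<noteq> x j"
    proof
      assume eq: "x (Suc j) = x j"
      then have "t j *\<^sub>R g (x j) = 0" using xstep[of j] by simp
      then have "g (x j) = 0" using tpos[of j] by simp
      then show False using gnz eq kj by simp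
    qed
    then have np: "norm (x (Suc j) - x j) > 0" by simp
    have "muW * (norm (x (Suc j) - x j))\<^sup>2 \<le> (g (x (Suc j)) - g (x j)) \<bullet> (x (Suc j) - x j)"
      by (rule mule[OF xW xW])
    also have "\<dots> \<le> norm (g (x (Suc j)) - g (x j)) * norm (x (Suc j) - x j)" by (rule norm_cauchy_schwarz)
    finally have "muW * norm (x (Suc j) - x j) \<le> norm (g (x (Suc j)) - g (x j))"
      using np by (simp add: power2_eq_square)
    then have Lge: "muW \<le> Lk (Suc j)" using np by (simp add: Lk_def adasga_L_def le_divide_eq)
    then have Lp: "Lk (Suc j) > 0" using mupos by linarith
    have "t (Suc j) = min (t j * S j) (\<omega> / Lk (Suc j))" using tstep[of j] Lp by simp
    then have "t (Suc j) \<le> \<omega> / Lk (Suc j)" by simp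
    also have "\<dots> \<le> \<omega> / muW" using Lge mupos omega(1) by (intro divide_left_mono) auto
    finally show ?thesis using kj by simp
  qed
  have contr: "E (Suc k) \<le> (1 - q) * E k" if k1: "k \<ge> 1" for k
  proof -
    define Xk where "Xk = (norm (x k - xs))\<^sup>2"
    define gk where "gk = norm (g (x k))"
    define Ik where "Ik = g (x k) \<bullet> (x k - xs)"
    have sc: "Ik \<ge> F k + muW / 2 * Xk"
    proof -
      have "f xs \<ge> f (x k) + g (x k) \<bullet> (xs - x k) + muW / 2 * (norm (xs - x k))\<^sup>2"
        by (rule sc_W[OF grad convW mule xsW xW])
      moreover have "g (x k) \<bullet> (xs - x k) = - Ik" by (simp add: Ik_def inner_diff_right)
      moreover have "norm (xs - x k) = norm (x k - xs)" by (rule norm_minus_commute)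
      ultimately show ?thesis by (simp add: F_def Xk_def)
    qed
    have co: "Ik \<ge> F k + gk\<^sup>2 / (2 * LW)"
      using coco_W[OF grad conv convW lipW LW(1) xsW gxs zW[of k]] by (simp add: Ik_def F_def gk_def)
    have IF: "Ik - F k \<ge> muW / 4 * Xk + gk\<^sup>2 / (4 * LW)" using sc co by simp
    have tk: "t k > 0" using tpos by simp
    have E1: "E (Suc k) \<le> Xk - 2 * t k * (Ik - F k) + A * (t k * gk)\<^sup>2 + A * (t k * \<theta> k * F k) / \<tau>"
      using Estep[of k] by (simp add: Xk_def Ik_def gk_def)
    have E2: "2 * t k * (Ik - F k) \<ge> t k * muW / 2 * Xk + t k * gk\<^sup>2 / (2 * LW)"
    proof -
      have "2 * t k * (Ik - F k) \<ge> 2 * t k * (muW / 4 * Xk + gk\<^sup>2 / (4 * LW))"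
        using IF tk by (intro mult_left_mono) auto
      then show ?thesis by (simp add: algebra_simps)
    qed
    have Xnn: "Xk \<ge> 0" by (simp add: Xk_def)
    have P1: "(1 - q) * Xk \<ge> Xk - t k * muW / 2 * Xk"
    proof -
      have "muW / 2 * tmin \<le> muW / 2 * t k" using tmin_le[of k] mupos by (intro mult_left_mono) auto
      then have "q \<le> t k * muW / 2" using q1 by (simp add: mult.commute)
      then have "q * Xk \<le> t k * muW / 2 * Xk" using Xnn by (rule mult_right_mono)
      then show ?thesis by (simp add: algebra_simps)
    qed
    have P2: "(1 - q) * (A * (t k * gk)\<^sup>2) \<ge> A * (t k * gk)\<^sup>2 - t k * gk\<^sup>2 / (2 * LW)"
    proof (cases "gk = 0")
      case True then show ?thesis by simp
    next
      case False
      then have gnz: "g (x k) \<noteq> 0" by (simp add: gk_def)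
      have tle: "t k \<le> \<omega> / muW" by (rule tmax[OF k1 gnz])
      have "q * t k \<le> (muW / 2 * tmin) * (\<omega> / muW)"
        using q1 tle qpos tk by (intro mult_mono) auto
      also have "\<dots> = tmin * \<omega> / 2" using mupos by simp
      also have "\<dots> \<le> (\<omega> / LW) * \<omega> / 2"
      proof -
        have "tmin * \<omega> \<le> (\<omega> / LW) * \<omega>" using tminle omega(1) by (intro mult_right_mono) auto
        then show ?thesis by (intro divide_right_mono) auto
      qed
      finally have qt: "q * t k \<le> \<omega>\<^sup>2 / (2 * LW)" by (simp add: power2_eq_square)
      have Aom: "A * \<omega>\<^sup>2 \<le> 1"
      proof -
        have "\<omega>\<^sup>2 \<le> 1 - \<omega>\<^sup>2" using om2 by simp
        then show ?thesis using om2lt by (simp add: A_def divide_le_eq)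
      qed
      have "A * (q * t k) \<le> A * (\<omega>\<^sup>2 / (2 * LW))" using qt Apos by (intro mult_left_mono) auto
      also have "\<dots> = (A * \<omega>\<^sup>2) / (2 * LW)" by simp
      also have "\<dots> \<le> 1 / (2 * LW)" using Aom LW(1) by (intro divide_right_mono) auto
      finally have Aqt: "A * q * t k \<le> 1 / (2 * LW)" by (simp add: mult.assoc)
      have "A * q * t k * (t k * gk\<^sup>2) \<le> 1 / (2 * LW) * (t k * gk\<^sup>2)"
        using Aqt tk by (intro mult_right_mono) auto
      then have "q * (A * (t k * gk)\<^sup>2) \<le> t k * gk\<^sup>2 / (2 * LW)"
        by (simp add: power_mult_distrib power2_eq_square algebra_simps)
      then show ?thesis by (simp add: algebra_simps)
    qed
    have P3: "(1 - q) * (A * (t k * \<theta> k * F k)) \<ge> A * (t k * \<theta> k * F k) / \<tau>"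
    proof -
      have nn: "A * (t k * \<theta> k * F k) \<ge> 0" using Apos tk thpos[of k] Fnn[of k]
        by (intro mult_nonneg_nonneg) auto
      have "A * (t k * \<theta> k * F k) / \<tau> = (1 / \<tau>) * (A * (t k * \<theta> k * F k))" by simp
      also have "\<dots> \<le> (1 - q) * (A * (t k * \<theta> k * F k))" using q3 nn by (intro mult_right_mono) auto
      finally show ?thesis .
    qed
    have "E (Suc k) \<le> (1 - q) * Xk + (1 - q) * (A * (t k * gk)\<^sup>2) + (1 - q) * (A * (t k * \<theta> k * F k))"
      using E1 E2 P1 P2 P3 by linarith
    also have "\<dots> = (1 - q) * E k" by (simp add: E_def Xk_def gk_def algebra_simps)
    finally show ?thesis .
  qed
  have decay: "E (Suc n) \<le> (1 - q) ^ n * eta" for n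
  proof (induction n)
    case 0 then show ?case using Emono[of 0] E0 by simp
  next
    case (Suc n)
    have "E (Suc (Suc n)) \<le> (1 - q) * E (Suc n)" by (rule contr) simp
    also have "\<dots> \<le> (1 - q) * ((1 - q) ^ n * eta)" using Suc qlt1 by (intro mult_left_mono) auto
    finally show ?case by simp
  qed
  have Xdec: "(norm (x k - xs))\<^sup>2 \<le> (1 - q) ^ (k - 1) * eta" if "k \<ge> 1" for k
    using XE[of k] decay[of "k - 1"] that by simp
  have rq: "0 < sqrt (1 - q)" "sqrt (1 - q) < 1" using qpos qlt1 by auto
  have rq2: "0 < 1 - q" "1 - q < 1" using qpos qlt1 by auto
  define c1 where "c1 = sqrt ((R + norm (x 0))\<^sup>2 + eta)"
  define c2 where "c2 = \<omega> * LW\<^sup>2 * c1\<^sup>2 / (muW * min ((\<alpha> 0)\<^sup>2 * (\<gamma> 0)\<^sup>2 * LW\<^sup>2) (\<omega>\<^sup>2))"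
  define c3 where "c3 = sqrt (2 * c1\<^sup>2 * (1 - \<omega>\<^sup>2) * \<omega> * LW^3)
                  / (sqrt (2 * \<omega>\<^sup>2 * LW + (1 - \<omega>\<^sup>2) * muW) * min (\<alpha> 0 * \<gamma> 0 * LW) \<omega>)"
  have Rsq: "eta \<le> R\<^sup>2"
  proof -
    have "sqrt eta \<le> R" using Rb seta norm_ge_zero[of xs] by linarith
    then have "(sqrt eta)\<^sup>2 \<le> R\<^sup>2" using seta by (intro power_mono) auto
    then show ?thesis using eta_nn by simp
  qed
  have RR: "R\<^sup>2 \<le> (R + norm (x 0))\<^sup>2" using Rpos by (intro power_mono) auto
  have c1sq: "c1\<^sup>2 = (R + norm (x 0))\<^sup>2 + eta" using eta_nn by (simp add: c1_def)
  have c1big: "c1\<^sup>2 \<ge> 2 * eta" using c1sq Rsq RR by linarith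
  have c1pos: "c1 > 0"
  proof -
    have "(R + norm (x 0))\<^sup>2 > 0" using Rpos by (smt (verit) norm_ge_zero zero_less_power2)
    then have "(R + norm (x 0))\<^sup>2 + eta > 0" using eta_nn by linarith
    then show ?thesis by (simp add: c1_def)
  qed
  have ca: "sqrt eta \<le> c1" unfolding c1_def by (rule real_sqrt_le_mono) simp
  have om1': "\<omega> \<le> 1" using om1 by simp
  have c2facts: "LW / 2 * eta \<le> c2 \<and> c2 > 0"
  proof -
    define mn where "mn = min ((\<alpha> 0)\<^sup>2 * (\<gamma> 0)\<^sup>2 * LW\<^sup>2) (\<omega>\<^sup>2)"
    have "(\<alpha> 0)\<^sup>2 * (\<gamma> 0)\<^sup>2 * LW\<^sup>2 = (\<alpha> 0 * \<gamma> 0 * LW)\<^sup>2" by (simp add: power_mult_distrib)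
    moreover have "(\<alpha> 0 * \<gamma> 0 * LW)\<^sup>2 > 0" using a0g0 LW(1) by (intro zero_less_power) simp
    ultimately have mnpos: "mn > 0" using omega(1) by (simp add: mn_def)
    have mnle: "mn \<le> \<omega>\<^sup>2" by (simp add: mn_def)
    have denpos: "muW * mn > 0" using mupos mnpos by simp
    have denle: "muW * mn \<le> LW * \<omega>\<^sup>2" using muL mnle mupos mnpos by (intro mult_mono) auto
    have numnn: "\<omega> * LW\<^sup>2 * c1\<^sup>2 \<ge> 0" using omega(1) by simp
    have "c2 = \<omega> * LW\<^sup>2 * c1\<^sup>2 / (muW * mn)" by (simp add: c2_def mn_def)
    moreover have "\<omega> * LW\<^sup>2 * c1\<^sup>2 / (LW * \<omega>\<^sup>2) \<le> \<omega> * LW\<^sup>2 * c1\<^sup>2 / (muW * mn)"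
      using denpos denle numnn by (intro divide_left_mono) auto
    moreover have "\<omega> * LW\<^sup>2 * c1\<^sup>2 / (LW * \<omega>\<^sup>2) = LW * c1\<^sup>2 / \<omega>"
      using omega(1) LW(1) by (simp add: power2_eq_square field_simps)
    moreover have "LW * c1\<^sup>2 \<le> LW * c1\<^sup>2 / \<omega>"
    proof -
      have "LW * c1\<^sup>2 / 1 \<le> LW * c1\<^sup>2 / \<omega>"
        using omega(1) om1' LW(1) by (intro divide_left_mono) auto
      then show ?thesis by simp
    qed
    moreover have "LW / 2 * eta \<le> LW * c1\<^sup>2"
    proof -
      have "LW / 2 * eta \<le> LW * (2 * eta)" using LW(1) eta_nn by (simp add: mult_right_mono)
      also have "\<dots> \<le> LW * c1\<^sup>2" using c1big LW(1) by (intro mult_left_mono) auto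
      finally show ?thesis .
    qed
    moreover have "c2 > 0" using denpos omega(1) LW(1) c1pos by (simp add: c2_def mn_def)
    ultimately show ?thesis by linarith
  qed
  have cb: "LW / 2 * eta \<le> c2" and c2pos: "c2 > 0" using c2facts by auto
  have c3facts: "LW * sqrt eta \<le> c3 \<and> c3 > 0"
  proof -
    define NUM where "NUM = 2 * c1\<^sup>2 * (1 - \<omega>\<^sup>2) * \<omega> * LW^3"
    define D where "D = 2 * \<omega>\<^sup>2 * LW + (1 - \<omega>\<^sup>2) * muW"
    define mn3 where "mn3 = min (\<alpha> 0 * \<gamma> 0 * LW) \<omega>"
    have om2nn: "1 - \<omega>\<^sup>2 \<ge> 0" using om2lt by simp
    have Dpos: "D > 0"
    proof -
      have "2 * \<omega>\<^sup>2 * LW > 0" using omega(1) LW(1) by simp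
      moreover have "(1 - \<omega>\<^sup>2) * muW \<ge> 0" using om2nn mupos by simp
      ultimately show ?thesis unfolding D_def by linarith
    qed
    have mn3pos: "mn3 > 0" using a0g0 LW(1) omega(1) by (simp add: mn3_def)
    have mn3le: "mn3 \<le> \<omega>" by (simp add: mn3_def)
    have Dle: "D \<le> (1 + \<omega>\<^sup>2) * LW"
    proof -
      have "(1 - \<omega>\<^sup>2) * muW \<le> (1 - \<omega>\<^sup>2) * LW" using muL om2nn by (intro mult_left_mono) auto
      then show ?thesis by (simp add: D_def algebra_simps)
    qed
    have mn3sq: "mn3\<^sup>2 \<le> \<omega>\<^sup>2" using mn3le mn3pos by (intro power_mono) auto
    have Dm: "D * mn3\<^sup>2 \<le> (1 + \<omega>\<^sup>2) * LW * \<omega>\<^sup>2" using Dle mn3sq Dpos by (intro mult_mono) auto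
    have Dmpos: "D * mn3\<^sup>2 > 0" using Dpos mn3pos by simp
    have inner: "eta * ((1 + \<omega>\<^sup>2) * \<omega>) \<le> 2 * c1\<^sup>2 * (1 - \<omega>\<^sup>2)"
    proof -
      have "(1 + \<omega>\<^sup>2) * \<omega> \<le> (3 / 2) * 1" using om2 om1' omega(1) by (intro mult_mono) auto
      then have "eta * ((1 + \<omega>\<^sup>2) * \<omega>) \<le> eta * ((3 / 2) * 1)" using eta_nn by (rule mult_left_mono)
      also have "\<dots> = eta * (3 / 2)" by simp
      also have "\<dots> \<le> c1\<^sup>2" using c1big eta_nn by simp
      also have "\<dots> \<le> 2 * c1\<^sup>2 * (1 - \<omega>\<^sup>2)"
      proof -
        have "c1\<^sup>2 * 1 \<le> c1\<^sup>2 * (2 * (1 - \<omega>\<^sup>2))" using om2 by (intro mult_left_mono) auto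
        then show ?thesis by (simp add: algebra_simps)
      qed
      finally show ?thesis .
    qed
    have key: "LW\<^sup>2 * eta * (D * mn3\<^sup>2) \<le> NUM"
    proof -
      have "LW\<^sup>2 * eta * (D * mn3\<^sup>2) \<le> LW\<^sup>2 * eta * ((1 + \<omega>\<^sup>2) * LW * \<omega>\<^sup>2)"
        using Dm eta_nn by (intro mult_left_mono) auto
      also have "\<dots> = (LW^3 * \<omega>) * (eta * ((1 + \<omega>\<^sup>2) * \<omega>))"
        by (simp add: power2_eq_square power3_eq_cube algebra_simps)
      also have "\<dots> \<le> (LW^3 * \<omega>) * (2 * c1\<^sup>2 * (1 - \<omega>\<^sup>2))"
        using inner LW(1) omega(1) by (intro mult_left_mono) auto
      also have "\<dots> = NUM" by (simp add: NUM_def algebra_simps)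
      finally show ?thesis .
    qed
    have NUMpos: "NUM > 0" using c1pos om2lt omega(1) LW(1) by (simp add: NUM_def)
    have "LW\<^sup>2 * eta \<le> NUM / (D * mn3\<^sup>2)" using key Dmpos by (simp add: le_divide_eq)
    then have "sqrt (LW\<^sup>2 * eta) \<le> sqrt (NUM / (D * mn3\<^sup>2))" by (rule real_sqrt_le_mono)
    moreover have "sqrt (LW\<^sup>2 * eta) = LW * sqrt eta" using LW(1) by (simp add: real_sqrt_mult)
    moreover have "sqrt (NUM / (D * mn3\<^sup>2)) = c3"
      using mn3pos by (simp add: c3_def NUM_def D_def mn3_def real_sqrt_divide real_sqrt_mult)
    moreover have "c3 > 0" using NUMpos Dpos mn3pos
      by (simp add: c3_def NUM_def D_def mn3_def)
    ultimately show ?thesis by simp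
  qed
  have cc: "LW * sqrt eta \<le> c3" and c3pos: "c3 > 0" using c3facts by auto
  have nxk: "norm (x k - xs) \<le> sqrt eta * sqrt (1 - q) ^ (k - 1)" if "k \<ge> 1" for k
  proof -
    have "norm (x k - xs) = sqrt ((norm (x k - xs))\<^sup>2)" by simp
    also have "\<dots> \<le> sqrt ((1 - q) ^ (k - 1) * eta)" using Xdec[OF that] by (rule real_sqrt_le_mono)
    also have "\<dots> = sqrt eta * sqrt (1 - q) ^ (k - 1)" by (simp add: real_sqrt_mult real_sqrt_power)
    finally show ?thesis .
  qed
  have Fk: "f (x k) - opt_val f \<le> LW / 2 * (norm (x k - xs))\<^sup>2" for k
    using desc_W[OF grad convW lipW xW[of k] xsW] gxs optv by simp
  have hitA: "(\<exists>k. norm (x k - xs) \<le> \<epsilon>) \<and> (LEAST k. norm (x k - xs) \<le> \<epsilon>) \<le> nat (Mbound \<epsilon> c1 (sqrt (1 - q)))"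
  proof (rule hit_bound[OF c1pos rq eps])
    show "norm (x 0 - xs) \<le> c1" using nx[of 0] ca by linarith
    fix k :: nat assume k: "k \<ge> 1"
    have "sqrt eta * sqrt (1 - q) ^ (k - 1) \<le> c1 * sqrt (1 - q) ^ (k - 1)"
      using ca rq by (intro mult_right_mono) auto
    then show "norm (x k - xs) \<le> c1 * sqrt (1 - q) ^ (k - 1)" using nxk[OF k] by linarith
  qed
  have hitB: "(\<exists>k. f (x k) - opt_val f \<le> \<epsilon>) \<and> (LEAST k. f (x k) - opt_val f \<le> \<epsilon>) \<le> nat (Mbound \<epsilon> c2 (1 - q))"
  proof (rule hit_bound[OF c2pos rq2 eps])
    have "LW / 2 * (norm (x 0 - xs))\<^sup>2 \<le> LW / 2 * eta" using XE[of 0] Ele[of 0] LW(1) by (intro mult_left_mono) auto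
    then show "f (x 0) - opt_val f \<le> c2" using Fk[of 0] cb by linarith
    fix k :: nat assume k: "k \<ge> 1"
    have "LW / 2 * (norm (x k - xs))\<^sup>2 \<le> LW / 2 * ((1 - q) ^ (k - 1) * eta)"
      using Xdec[OF k] LW(1) by (intro mult_left_mono) auto
    also have "\<dots> = (LW / 2 * eta) * (1 - q) ^ (k - 1)" by simp
    also have "\<dots> \<le> c2 * (1 - q) ^ (k - 1)" using cb rq2 by (intro mult_right_mono) auto
    finally show "f (x k) - opt_val f \<le> c2 * (1 - q) ^ (k - 1)" using Fk[of k] by linarith
  qed
  have hitC: "(\<exists>k. norm (g (x k)) \<le> \<epsilon>) \<and> (LEAST k. norm (g (x k)) \<le> \<epsilon>) \<le> nat (Mbound \<epsilon> c3 (sqrt (1 - q)))"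
  proof (rule hit_bound[OF c3pos rq eps])
    have "LW * norm (x 0 - xs) \<le> LW * sqrt eta" using nx[of 0] LW(1) by (intro mult_left_mono) auto
    then show "norm (g (x 0)) \<le> c3" using gle[of 0] cc by linarith
    fix k :: nat assume k: "k \<ge> 1"
    have "LW * norm (x k - xs) \<le> LW * (sqrt eta * sqrt (1 - q) ^ (k - 1))"
      using nxk[OF k] LW(1) by (intro mult_left_mono) auto
    also have "\<dots> = (LW * sqrt eta) * sqrt (1 - q) ^ (k - 1)" by simp
    also have "\<dots> \<le> c3 * sqrt (1 - q) ^ (k - 1)" using cc rq by (intro mult_right_mono) auto
    finally show "norm (g (x k)) \<le> c3 * sqrt (1 - q) ^ (k - 1)" using gle[of k] by linarith
  qed
  have xsA: "xs \<in> argmin_set f" using xsX by (simp add: X_def)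
  have main: "\<exists>xs\<in>argmin_set f.
              ((\<exists>k. norm (x k - xs) \<le> \<epsilon>) \<and>
                 (LEAST k. norm (x k - xs) \<le> \<epsilon>) \<le> nat (Mbound \<epsilon> c1 (sqrt (1 - q)))) \<and>
              ((\<exists>k. f (x k) - opt_val f \<le> \<epsilon>) \<and>
                 (LEAST k. f (x k) - opt_val f \<le> \<epsilon>) \<le> nat (Mbound \<epsilon> c2 (1 - q))) \<and>
              ((\<exists>k. norm (g (x k)) \<le> \<epsilon>) \<and>
                 (LEAST k. norm (g (x k)) \<le> \<epsilon>) \<le> nat (Mbound \<epsilon> c3 (sqrt (1 - q))))"
    using xsA hitA hitB hitC by blast
  show ?thesis
    unfolding Let_def
    using main unfolding c1_def c2_def c3_def q_def m_def muW_def MS_def eta_def W_def .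
qed

end
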